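(* Let $\Sigma,\Gamma$ be finite alphabets, each with at least two letters. For every infinite word $w\in\Sigma^{\mathbb{N}}$, $\mathrm{ACE}_{\mathcal{I}}(w) \le \mathrm{ACE}'_{\mathcal{I}}(w)$.
   Context: $\mathrm{Fact}_n(w)$ is the set of length-$n$ factors of $w$. For a nonempty word $v$ and integer $p\ge0$, $v^{p/|v|}$ is the prefix of length $p$ of $vvv\cdots$. For a nonempty finite word $u$, $\mathrm{E}(u) = \sup\{ r \in \mathbb{Q} : u = v^r \text{ for some nonempty } v\}$. $\mathcal{I}$ is the set of injective morphisms $\Sigma^*\to\Gamma^*$; for a finite nonempty word $u\in\Sigma^+$, $\mathrm{E}_{\mathcal{I}}(u) = \sup\{\mathrm{E}(h(u)) : h\in\mathcal{I}\}$. For an infinite word $w$, $\mathrm{ACE}(w) = \limsup_{n\to\infty}\sup\{\mathrm{E}(u) : u\in\mathrm{Fact}_n(w)\}$, $\mathrm{ACE}_{\mathcal{I}}(w) = \sup\{\mathrm{ACE}(h(w)) : h\in\mathcal{I}\}$, and $\mathrm{ACE}'_{\mathcal{I}}(w) = \limsup_{n\to\infty}\sup\{\mathrm{E}_{\mathcal{I}}(u) : u\in\mathrm{Fact}_n(w)\}$. *)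

theory Defs
  imports Complex_Main "HOL-Library.Extended_Real" "HOL-Library.Liminf_Limsup"
begin

definition Fact :: "nat \<Rightarrow> (nat \<Rightarrow> 'a) \<Rightarrow> 'a list set" where
  "Fact n w = {map w [i..<i+n] | i. True}"

(* v^{p/|v|}: prefix of length p of v v v ... *)
definition pref_pow :: "'a list \<Rightarrow> nat \<Rightarrow> 'a list" where
  "pref_pow v p = map (\<lambda>i. v ! (i mod length v)) [0..<p]"

(* E(u) = sup { r : u = v^r, v nonempty };  u = v^r means r = |u|/|v| and
   u is the prefix of length |u| of v^omega *)
definition Exp :: "'a list \<Rightarrow> ereal" where
  "Exp u = Sup {ereal (real (length u) / real (length v)) | v.
                   v \<noteq> [] \<and> u = pref_pow v (length u)}"

definition morph :: "('a \<Rightarrow> 'b list) \<Rightarrow> 'a list \<Rightarrow> 'b list" where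
  "morph h u = concat (map h u)"

definition Inj_morphs :: "'a set \<Rightarrow> 'b set \<Rightarrow> ('a \<Rightarrow> 'b list) set" where
  "Inj_morphs \<Sigma> \<Gamma> = {h. (\<forall>a\<in>\<Sigma>. set (h a) \<subseteq> \<Gamma>) \<and> inj_on (morph h) (lists \<Sigma>)}"

(* image of an infinite word under a morphism with nonempty images
   (all injective morphisms have nonempty images):
   the n-th letter of h(w) is the n-th letter of h(w_0 ... w_n) *)
definition morph_inf :: "('a \<Rightarrow> 'b list) \<Rightarrow> (nat \<Rightarrow> 'a) \<Rightarrow> nat \<Rightarrow> 'b" where
  "morph_inf h w n = morph h (map w [0..<Suc n]) ! n"

definition ACE :: "(nat \<Rightarrow> 'a) \<Rightarrow> ereal" where
  "ACE w = limsup (\<lambda>n. Sup (Exp ` Fact n w))"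

definition Exp_I :: "'a set \<Rightarrow> 'b set \<Rightarrow> 'a list \<Rightarrow> ereal" where
  "Exp_I \<Sigma> \<Gamma> u = Sup {Exp (morph h u) | h. h \<in> Inj_morphs \<Sigma> \<Gamma>}"

definition ACE_I :: "'a set \<Rightarrow> 'b set \<Rightarrow> (nat \<Rightarrow> 'a) \<Rightarrow> ereal" where
  "ACE_I \<Sigma> \<Gamma> w = Sup {ACE (morph_inf h w) | h. h \<in> Inj_morphs \<Sigma> \<Gamma>}"

definition ACE'_I :: "'a set \<Rightarrow> 'b set \<Rightarrow> (nat \<Rightarrow> 'a) \<Rightarrow> ereal" where
  "ACE'_I \<Sigma> \<Gamma> w = limsup (\<lambda>n. Sup (Exp_I \<Sigma> \<Gamma> ` Fact n w))"

end

theory Submission imports Defs "HOL-Real_Asymp.Real_Asymp" begin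

lemma morph_append: "morph h (xs @ ys) = morph h xs @ morph h ys"
  by (simp add: morph_def)

lemma pref_pow_nth: "t < p \<Longrightarrow> pref_pow v p ! t = v ! (t mod length v)"
  by (simp add: pref_pow_def)

lemma pref_pow_len[simp]: "length (pref_pow v p) = p"
  by (simp add: pref_pow_def)

lemma factor_pow:
  assumes u: "u = pref_pow v (length u)" and v: "v \<noteq> []"
    and len: "s + length y \<le> length u" and y: "\<And>t. t < length y \<Longrightarrow> y ! t = u ! (s + t)"
  shows "y = pref_pow (rotate s v) (length y)"
proof (rule nth_equalityI)
  show "length y = length (pref_pow (rotate s v) (length y))" by simp
next
  fix t assume t: "t < length y"
  have "y ! t = u ! (s + t)" using y t by simp
  also have "\<dots> = v ! ((s+t) mod length v)"
    using u len t by (metis add_less_cancel_left order_less_le_trans pref_pow_nth)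
  also have "\<dots> = rotate s v ! (t mod length v)"
    using v by (simp add: nth_rotate add.commute mod_add_right_eq)
  also have "\<dots> = pref_pow (rotate s v) (length y) ! t" using t by (simp add: pref_pow_nth)
  finally show "y ! t = pref_pow (rotate s v) (length y) ! t" .
qed

lemma Exp_ge:
  assumes "u = pref_pow v (length u)" "v \<noteq> []"
  shows "ereal (real (length u) / real (length v)) \<le> Exp u"
  unfolding Exp_def by (rule Sup_upper) (use assms in blast)

lemma step_exists:
  fixes P :: "nat \<Rightarrow> nat"
  assumes "P 0 = 0" "\<And>k. P k < P (Suc k)"
  shows "\<exists>k. P k \<le> t \<and> t < P (Suc k)"
proof (induction t)
  case 0 then show ?case using assms(1) assms(2)[of 0] by (intro exI[of _ 0]) auto
next
  case (Suc t)
  then obtain k where k: "P k \<le> t" "t < P (Suc k)" by blast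
  show ?case
  proof (cases "Suc t < P (Suc k)")
    case True then show ?thesis using k by (intro exI[of _ k]) auto
  next
    case False then have "P (Suc k) = Suc t" using k by simp
    then show ?thesis using assms(2)[of "Suc k"] by (intro exI[of _ "Suc k"]) auto
  qed
qed

lemma P_add_bound:
  fixes P :: "nat \<Rightarrow> nat"
  assumes "\<And>k. P (Suc k) \<le> P k + L"
  shows "P (j + d) \<le> P j + d * L"
proof (induction d)
  case 0 then show ?case by simp
next
  case (Suc d)
  have "P (j + Suc d) \<le> P (j + d) + L" using assms[of "j+d"] by simp
  then show ?case using Suc by simp
qed

definition Pf :: "('a \<Rightarrow> 'b list) \<Rightarrow> (nat \<Rightarrow> 'a) \<Rightarrow> nat \<Rightarrow> nat" where
  "Pf h w k = length (morph h (map w [0..<k]))"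

lemma morph_upt_Suc: "morph h (map w [0..<Suc k]) = morph h (map w [0..<k]) @ h (w k)"
  by (simp add: morph_def)

lemma Pf_Suc: "Pf h w (Suc k) = Pf h w k + length (h (w k))"
  unfolding Pf_def morph_upt_Suc by simp

lemma Pf_0[simp]: "Pf h w 0 = 0" by (simp add: Pf_def morph_def)

lemma Pf_less: assumes "\<forall>a\<in>\<Sigma>. h a \<noteq> []" "\<forall>n. w n \<in> \<Sigma>"
  shows "Pf h w k < Pf h w (Suc k)"
  using assms by (simp add: Pf_Suc)

lemma Pf_strict: assumes "\<forall>a\<in>\<Sigma>. h a \<noteq> []" "\<forall>n. w n \<in> \<Sigma>"
  shows "strict_mono (Pf h w)"
  using Pf_less[OF assms] by (simp add: strict_mono_Suc_iff)

lemma Pf_le: assumes "\<forall>a\<in>\<Sigma>. length (h a) \<le> L" "\<forall>n. w n \<in> \<Sigma>"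
  shows "Pf h w (Suc k) \<le> Pf h w k + L"
  using assms by (simp add: Pf_Suc)

lemma morph_upt_split: "j \<le> k \<Longrightarrow> morph h (map w [0..<k]) = morph h (map w [0..<j]) @ morph h (map w [j..<k])"
  by (metis le_Suc_ex morph_append upt_add_eq_append zero_le map_append)

lemma morph_inf_nth:
  assumes "\<forall>a\<in>\<Sigma>. h a \<noteq> []" "\<forall>n. w n \<in> \<Sigma>" "t < Pf h w k"
  shows "morph_inf h w t = morph h (map w [0..<k]) ! t"
proof -
  have st: "strict_mono (Pf h w)" by (rule Pf_strict[OF assms(1,2)])
  have a: "t < Pf h w (Suc t)" using strict_mono_imp_increasing[OF st, of "Suc t"] by simp
  show ?thesis
  proof (cases "Suc t \<le> k")
    case True
    show ?thesis unfolding morph_inf_def using morph_upt_split[OF True, of h w] a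
      by (simp add: Pf_def nth_append)
  next
    case False
    then have "k \<le> Suc t" by simp
    show ?thesis unfolding morph_inf_def using morph_upt_split[OF \<open>k \<le> Suc t\<close>, of h w] assms(3)
      by (simp add: Pf_def nth_append)
  qed
qed

lemma factor_align:
  assumes hne: "\<forall>a\<in>\<Sigma>. h a \<noteq> []" and wS: "\<forall>n. w n \<in> \<Sigma>"
    and hL: "\<forall>a\<in>\<Sigma>. length (h a) \<le> L" and n: "2 * L < n"
  shows "\<exists>j k. j \<le> k \<and> i \<le> Pf h w j \<and> Pf h w k \<le> i + n
     \<and> n \<le> length (morph h (map w [j..<k])) + 2 * L
     \<and> length (morph h (map w [j..<k])) \<le> (k - j) * L
     \<and> (\<forall>t < length (morph h (map w [j..<k])).
           morph h (map w [j..<k]) ! t = map (morph_inf h w) [i..<i+n] ! ((Pf h w j - i) + t))"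
proof -
  let ?P = "Pf h w"
  have inc: "\<And>k. ?P k < ?P (Suc k)" using Pf_less[OF hne wS] .
  have st: "strict_mono ?P" using Pf_strict[OF hne wS] .
  have le: "\<And>k. ?P (Suc k) \<le> ?P k + L" using Pf_le[OF hL wS] .
  obtain j where j: "i \<le> ?P j" "?P j \<le> i + L"
  proof (cases i)
    case 0 then show ?thesis using that[of 0] by simp
  next
    case (Suc i')
    obtain k0 where "?P k0 \<le> i'" "i' < ?P (Suc k0)" using step_exists[of ?P i'] inc by auto
    then show ?thesis using that[of "Suc k0"] le[of k0] Suc by simp
  qed
  obtain k where k: "?P k \<le> i + n" "i + n < ?P (Suc k)"
    using step_exists[of ?P "i+n"] inc by auto
  have jk: "j \<le> k"
  proof (rule ccontr)
    assume "\<not> j \<le> k" then have "Suc k \<le> j" by simp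
    then have "?P (Suc k) \<le> ?P j" using st by (simp add: strict_mono_less_eq)
    then show False using j k n by simp
  qed
  have pk: "i + n < ?P k + L" using k le[of k] by simp
  define y where "y = morph h (map w [j..<k])"
  have split: "morph h (map w [0..<k]) = morph h (map w [0..<j]) @ y"
    using morph_upt_split[OF jk] y_def by simp
  have ly: "length y = ?P k - ?P j" using split by (simp add: Pf_def)
  have pjk: "?P j \<le> ?P k" using jk st by (simp add: strict_mono_less_eq)
  have lyL: "length y \<le> (k - j) * L"
    using P_add_bound[of ?P L j "k - j", OF le] jk ly by simp
  have nth: "y ! t = map (morph_inf h w) [i..<i+n] ! ((?P j - i) + t)" if t: "t < length y" for t
  proof -
    have "?P j + t < ?P k" using t ly pjk by simp
    then have "morph_inf h w (?P j + t) = morph h (map w [0..<k]) ! (?P j + t)"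
      using morph_inf_nth[OF hne wS] by blast
    also have "\<dots> = y ! t" using split by (simp add: Pf_def nth_append)
    finally have e: "morph_inf h w (?P j + t) = y ! t" .
    have "?P j - i + t < n" using t ly k j by simp
    then show ?thesis using e j by simp
  qed
  show ?thesis
    apply (rule exI[of _ j], rule exI[of _ k])
    using jk j k pk ly lyL nth y_def by auto
qed


lemma conv_aux: "(\<lambda>n. real n / (real n - 2 * real L) * c) \<longlonglongrightarrow> (c::real)"
  by real_asymp

lemma ACE_le:
  assumes hI: "h \<in> Inj_morphs \<Sigma> \<Gamma>" and fin: "finite \<Sigma>" and wS: "\<forall>n. w n \<in> \<Sigma>"
  shows "ACE (morph_inf h w) \<le> ACE'_I \<Sigma> \<Gamma> w"
proof -
  have inj: "inj_on (morph h) (lists \<Sigma>)" using hI by (simp add: Inj_morphs_def)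
  have hne: "\<forall>a\<in>\<Sigma>. h a \<noteq> []"
  proof
    fix a assume a: "a \<in> \<Sigma>"
    show "h a \<noteq> []"
    proof
      assume "h a = []"
      then have "morph h [a] = morph h []" by (simp add: morph_def)
      then show False using inj a by (metis inj_on_eq_iff lists.Cons lists.Nil not_Cons_self2)
    qed
  qed
  define L where "L = Max ((\<lambda>a. length (h a)) ` \<Sigma>)"
  have hL: "\<forall>a\<in>\<Sigma>. length (h a) \<le> L" unfolding L_def using fin by simp
  have L1: "1 \<le> L" using hL hne wS by (metis One_nat_def Suc_leI length_greater_0_conv le_trans)
  define g where "g m = Sup (Exp_I \<Sigma> \<Gamma> ` Fact m w)" for m
  define f where "f n = Sup (Exp ` Fact n (morph_inf h w))" for n
  have A: "ACE (morph_inf h w) = limsup f" unfolding ACE_def f_def by simp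
  have B: "ACE'_I \<Sigma> \<Gamma> w = limsup g" unfolding ACE'_I_def g_def by simp
  show ?thesis unfolding A B
  proof (rule dense_ge)
    fix z assume z: "limsup g < z"
    show "limsup f \<le> z"
    proof (cases z)
      case (real c)
      have "eventually (\<lambda>m. g m < ereal c) sequentially" using Limsup_lessD z real by blast
      then obtain M where M: "\<And>m. m \<ge> M \<Longrightarrow> g m < ereal c" by (auto simp: eventually_sequentially)
      have bound: "f n \<le> ereal (real n / (real n - 2 * real L) * c)" if nN: "n \<ge> (M + 2) * L + 1" for n
        unfolding f_def
      proof (rule Sup_least)
        fix u assume "u \<in> Exp ` Fact n (morph_inf h w)"
        then obtain i where u: "u = Exp (map (morph_inf h w) [i..<i+n])"
          by (auto simp: Fact_def)
        have n2L: "2 * L < n" using nN L1 by (simp add: algebra_simps)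
        obtain j k where jk: "j \<le> k" "i \<le> Pf h w j" "Pf h w k \<le> i + n"
          "n \<le> length (morph h (map w [j..<k])) + 2 * L"
          "length (morph h (map w [j..<k])) \<le> (k - j) * L"
          "\<forall>t < length (morph h (map w [j..<k])).
           morph h (map w [j..<k]) ! t = map (morph_inf h w) [i..<i+n] ! ((Pf h w j - i) + t)"
          using factor_align[OF hne wS hL n2L, of i] by blast
        define y where "y = morph h (map w [j..<k])"
        define x where "x = map (morph_inf h w) [i..<i+n]"
        define l where "l = length y"
        have ly: "length y = Pf h w k - Pf h w j"
          using morph_upt_split[OF jk(1), of h w] by (simp add: Pf_def y_def)
        have pjk: "Pf h w j \<le> Pf h w k"
          using jk(1) Pf_strict[OF hne wS] by (simp add: strict_mono_less_eq)
        have mM: "M \<le> k - j"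
        proof (rule ccontr)
          assume "\<not> M \<le> k - j"
          then have "(k - j) * L \<le> M * L" by simp
          then show False using jk(4,5) nN y_def by (simp add: algebra_simps)
        qed
        have xF: "map w [j..<k] \<in> Fact (k - j) w" unfolding Fact_def using jk(1) by (intro CollectI exI[of _ j]) simp
        have "Exp y \<le> Exp_I \<Sigma> \<Gamma> (map w [j..<k])"
          unfolding Exp_I_def y_def by (rule Sup_upper) (use hI in blast)
        also have "\<dots> \<le> g (k - j)" unfolding g_def by (rule Sup_upper) (use xF in blast)
        finally have Ey: "Exp y < ereal c" using M[OF mM] by simp
        have lpos: "real n - 2 * real L \<le> real l" using jk(4) l_def y_def by simp
        have lpos2: "0 < real n - 2 * real L" using n2L by simp
        show "u \<le> ereal (real n / (real n - 2 * real L) * c)"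
          unfolding u Exp_def x_def[symmetric]
        proof (rule Sup_least)
          fix e assume "e \<in> {ereal (real (length x) / real (length v)) | v.
                   v \<noteq> [] \<and> x = pref_pow v (length x)}"
          then obtain v where v: "v \<noteq> []" "x = pref_pow v (length x)"
            and e: "e = ereal (real n / real (length v))" by (auto simp: x_def)
          have "y = pref_pow (rotate (Pf h w j - i) v) (length y)"
            by (rule factor_pow[OF v(2) v(1)]) (use jk ly x_def y_def pjk in auto)
          then have "ereal (real l / real (length v)) \<le> Exp y"
            using Exp_ge[of y "rotate (Pf h w j - i) v"] v l_def by simp
          then have "ereal (real l / real (length v)) < ereal c" using Ey by (rule le_less_trans)
          then have lc: "real l / real (length v) < c" by simp
          have q: "0 < real (length v)" using v by simp
          have lp: "0 < real l" using lpos lpos2 by simp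
          have c0: "0 < c" using lc q lp by (meson divide_pos_pos less_trans)
          have "real n / real (length v) = real n / real l * (real l / real (length v))"
            using lp by simp
          also have "\<dots> \<le> real n / real l * c" using lc lp by (intro mult_left_mono) auto
          also have "\<dots> \<le> real n / (real n - 2 * real L) * c"
            using lpos lpos2 c0 by (intro mult_right_mono divide_left_mono) auto
          finally show "e \<le> ereal (real n / (real n - 2 * real L) * c)" using e by simp
        qed
      qed
      have "limsup f \<le> limsup (\<lambda>n. ereal (real n / (real n - 2 * real L) * c))"
        by (rule Limsup_mono) (use bound in \<open>auto simp: eventually_sequentially\<close>)
      also have "\<dots> = ereal c"
        by (rule lim_imp_Limsup, simp, rule tendsto_ereal, rule conv_aux)
      finally show ?thesis using real by simp
    next
      case PInf then show ?thesis by simp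
    next
      case MInf then show ?thesis using z by simp
    qed
  qed
qed

theorem corollary21:
  fixes \<Sigma> :: "'a set" and \<Gamma> :: "'b set" and w :: "nat \<Rightarrow> 'a"
  assumes "finite \<Sigma>" and "card \<Sigma> \<ge> 2"
    and "finite \<Gamma>" and "card \<Gamma> \<ge> 2"
    and "\<forall>n. w n \<in> \<Sigma>"
  shows "ACE_I \<Sigma> \<Gamma> w \<le> ACE'_I \<Sigma> \<Gamma> w"
  unfolding ACE_I_def
  by (rule Sup_least) (use ACE_le assms in blast)

end
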